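(* Let $n\ge 2$ be an integer and let $e$ be the order of the element $b^{-n}a^{-n}(ab)^{n}$ in the Schur multiplier $M(R(2,n))$. If $G$ is any finite group of exponent $n$, then the exponent of $M(G)$ divides $ne$.
   Context: $R(2,n)$ denotes the largest finite $2$-generator group of exponent $n$, written as $R(2,n)=F/R$ with $F$ the free group on free generators $a,b$. For a group $G=F/R$ with $F$ free, the Schur multiplier is given by Hopf's formula $M(G)=(R\cap F')/[F,R]$, a subgroup of $F/[F,R]$. The element $b^{-n}a^{-n}(ab)^{n}[F,R]$ lies in $(R\cap F')/[F,R]=M(R(2,n))$ and $e$ is its order there. *)

theory Defs
  imports "HOL-Algebra.Algebra"
begin

text \<open>The exponent: the (unique) d such that x^m = 1 for all x iff d divides m
  (0 if there is no positive such m), in the same style as the library's ord.\<close>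
definition group_exponent :: "('a, 'b) monoid_scheme \<Rightarrow> nat" where
  "group_exponent G =
     (SOME d. \<forall>m::nat. (\<forall>x\<in>carrier G. x [^]\<^bsub>G\<^esub> m = \<one>\<^bsub>G\<^esub>) \<longleftrightarrow> d dvd m)"

text \<open>A letter (False, x) stands for the generator x, (True, x) for its inverse.\<close>
definition canceling :: "bool \<times> 'a \<Rightarrow> bool \<times> 'a \<Rightarrow> bool" where
  "canceling u v \<longleftrightarrow> snd u = snd v \<and> fst u \<noteq> fst v"

definition red_cons :: "bool \<times> 'a \<Rightarrow> (bool \<times> 'a) list \<Rightarrow> (bool \<times> 'a) list" where
  "red_cons u w = (case w of [] \<Rightarrow> [u] | v # w' \<Rightarrow> (if canceling u v then w' else u # w))"

definition reduce :: "(bool \<times> 'a) list \<Rightarrow> (bool \<times> 'a) list" where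
  "reduce w = foldr red_cons w []"

definition reduced :: "(bool \<times> 'a) list \<Rightarrow> bool" where
  "reduced w \<longleftrightarrow> (\<forall>i. Suc i < length w \<longrightarrow> \<not> canceling (w ! i) (w ! Suc i))"

definition free_group :: "'a set \<Rightarrow> ((bool \<times> 'a) list) monoid" where
  "free_group S = \<lparr> carrier = {w. reduced w \<and> snd ` set w \<subseteq> S},
                    monoid.mult = (\<lambda>u v. reduce (u @ v)),
                    one = [] \<rparr>"

definition gen :: "'a \<Rightarrow> (bool \<times> 'a) list" where
  "gen x = [(False, x)]"

definition free_lift ::
  "('g, 'c) monoid_scheme \<Rightarrow> ('a \<Rightarrow> 'g) \<Rightarrow> (bool \<times> 'a) list \<Rightarrow> 'g" where
  "free_lift G f w =
     foldr (\<lambda>u acc. (if fst u then inv\<^bsub>G\<^esub> (f (snd u)) else f (snd u)) \<otimes>\<^bsub>G\<^esub> acc) w \<one>\<^bsub>G\<^esub>"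

definition comm_subgroup :: "('a, 'b) monoid_scheme \<Rightarrow> 'a set \<Rightarrow> 'a set \<Rightarrow> 'a set" where
  "comm_subgroup F H K =
     generate F {inv\<^bsub>F\<^esub> h \<otimes>\<^bsub>F\<^esub> inv\<^bsub>F\<^esub> k \<otimes>\<^bsub>F\<^esub> h \<otimes>\<^bsub>F\<^esub> k | h k. h \<in> H \<and> k \<in> K}"

text \<open>Hopf's formula: for a presentation F/R, the group (R \<inter> F')/[F,R].\<close>
definition hopf_multiplier :: "('a, 'b) monoid_scheme \<Rightarrow> 'a set \<Rightarrow> 'a set monoid" where
  "hopf_multiplier F R =
     subgroup_generated F (R \<inter> derived F (carrier F)) Mod comm_subgroup F (carrier F) R"

definition schur_multiplier ::
  "('g, 'c) monoid_scheme \<Rightarrow> ((bool \<times> 'g) list) set monoid" where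
  "schur_multiplier G =
     hopf_multiplier (free_group (carrier G))
       (kernel (free_group (carrier G)) G (free_lift G id))"

abbreviation F2 :: "((bool \<times> bool) list) monoid" where
  "F2 \<equiv> free_group (UNIV :: bool set)"

abbreviation gen_a :: "(bool \<times> bool) list" where "gen_a \<equiv> gen False"
abbreviation gen_b :: "(bool \<times> bool) list" where "gen_b \<equiv> gen True"

text \<open>The relator subgroup R with R(2,n) = F2/R: intersection of all normal
  subgroups of finite index whose quotient has exponent dividing n.\<close>
definition burnside_R :: "nat \<Rightarrow> (bool \<times> bool) list set" where
  "burnside_R n = \<Inter> {N. N \<lhd> F2 \<and> finite (carrier (F2 Mod N)) \<and>
                          (\<forall>x\<in>carrier F2. x [^]\<^bsub>F2\<^esub> n \<in> N)}"

definition schur_e :: "nat \<Rightarrow> nat" where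
  "schur_e n =
     (let R = burnside_R n;
          w = inv\<^bsub>F2\<^esub> (gen_b [^]\<^bsub>F2\<^esub> n) \<otimes>\<^bsub>F2\<^esub> inv\<^bsub>F2\<^esub> (gen_a [^]\<^bsub>F2\<^esub> n)
                \<otimes>\<^bsub>F2\<^esub> (gen_a \<otimes>\<^bsub>F2\<^esub> gen_b) [^]\<^bsub>F2\<^esub> n
      in group.ord (hopf_multiplier F2 R) (comm_subgroup F2 (carrier F2) R #>\<^bsub>F2\<^esub> w))"

end

theory Submission
  imports Defs
begin

lemma canceling_sym: "canceling u v = canceling v u"
  unfolding canceling_def by auto

lemma cancel3: "canceling u v \<Longrightarrow> canceling v w \<Longrightarrow> u = (w :: bool \<times> 'a)"
  unfolding canceling_def by (cases u; cases v; cases w) auto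

lemma reduced_Nil[simp]: "reduced []" and reduced_single[simp]: "reduced [u]"
  unfolding reduced_def by auto

lemma reduced_Cons2[simp]: "reduced (u # v # w) \<longleftrightarrow> \<not> canceling u v \<and> reduced (v # w)"
  unfolding reduced_def
proof safe
  fix i assume "\<forall>i. Suc i < length (u # v # w) \<longrightarrow> \<not> canceling ((u # v # w) ! i) ((u # v # w) ! Suc i)"
    "Suc i < length (v # w)" "canceling ((v # w) ! i) ((v # w) ! Suc i)"
  then show False by (metis Suc_less_eq length_Cons nth_Cons_Suc)
next
  fix i assume a: "\<not> canceling u v" "\<forall>i. Suc i < length (v # w) \<longrightarrow> \<not> canceling ((v # w) ! i) ((v # w) ! Suc i)"
    "Suc i < length (u # v # w)" "canceling ((u # v # w) ! i) ((u # v # w) ! Suc i)"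
  then show False by (cases i) auto
qed (auto dest: spec[of _ 0])

lemma reduced_ConsD: "reduced (u # w) \<Longrightarrow> reduced w"
  by (cases w) auto

lemma red_cons_reduced: "reduced w \<Longrightarrow> reduced (red_cons u w)"
  unfolding red_cons_def
  by (cases w) (auto split: list.splits dest: reduced_ConsD)

lemma foldr_reduced: "reduced z \<Longrightarrow> reduced (foldr red_cons xs z)"
  by (induction xs) (auto intro: red_cons_reduced)

lemma reduce_reduced: "reduced (reduce w)"
  unfolding reduce_def by (rule foldr_reduced) simp

lemma red_cons_id: "reduced (u # w) \<Longrightarrow> red_cons u w = u # w"
  unfolding red_cons_def by (cases w) auto

lemma reduce_Cons: "reduce (u # w) = red_cons u (reduce w)"
  unfolding reduce_def by simp

lemma reduce_id: "reduced w \<Longrightarrow> reduce w = w"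
proof (induction w)
  case (Cons u w)
  then show ?case using reduced_ConsD[OF Cons.prems] red_cons_id[OF Cons.prems] by (simp add: reduce_Cons)
qed (simp add: reduce_def)

lemma cancel_lemma:
  assumes "reduced z" "canceling u v"
  shows "red_cons u (red_cons v z) = z"
proof (cases z)
  case Nil then show ?thesis using assms by (simp add: red_cons_def)
next
  case (Cons v' z')
  show ?thesis
  proof (cases "canceling v v'")
    case True
    then have "u = v'" using assms cancel3 by metis
    then show ?thesis using assms Cons True
      by (cases z') (auto simp: red_cons_def)
  next
    case False
    then show ?thesis using assms Cons by (simp add: red_cons_def)
  qed
qed

lemma foldr_reduce: "reduced z \<Longrightarrow> foldr red_cons (reduce u) z = foldr red_cons u z"
proof (induction u)
  case Nil then show ?case by (simp add: reduce_def)
next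
  case (Cons x u')
  define r where "r = reduce u'"
  have rr: "reduced r" using reduce_reduced r_def by blast
  have IH: "foldr red_cons r z = foldr red_cons u' z" using Cons r_def by simp
  show ?case
  proof (cases "\<exists>y r'. r = y # r' \<and> canceling x y")
    case True
    then obtain y r' where y: "r = y # r'" "canceling x y" by blast
    have "foldr red_cons (reduce (x # u')) z = foldr red_cons r' z"
      using y by (simp add: reduce_Cons r_def[symmetric] red_cons_def)
    also have "\<dots> = red_cons x (red_cons y (foldr red_cons r' z))"
      using cancel_lemma[OF foldr_reduced[OF Cons.prems] y(2)] by simp
    also have "\<dots> = red_cons x (foldr red_cons r z)" using y by simp
    finally show ?thesis using IH by simp
  next
    case False
    then have "red_cons x r = x # r" by (cases r) (auto simp: red_cons_def)
    then show ?thesis using IH by (simp add: reduce_Cons r_def[symmetric])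
  qed
qed

lemma reduce_append: "reduce (u @ v) = foldr red_cons u (reduce v)"
  unfolding reduce_def by simp

lemma reduce_append_left: "reduce (reduce u @ v) = reduce (u @ v)"
  by (simp add: reduce_append foldr_reduce reduce_reduced)

lemma reduce_append_right: "reduce (u @ reduce v) = reduce (u @ v)"
  by (simp add: reduce_append reduce_id reduce_reduced)

definition winv :: "(bool \<times> 'a) list \<Rightarrow> (bool \<times> 'a) list" where
  "winv w = rev (map (\<lambda>(b, x). (\<not> b, x)) w)"

lemma winv_winv[simp]: "winv (winv w) = w"
  unfolding winv_def by (induction w) auto

lemma winv_Cons: "winv (u # w) = winv w @ [(\<not> fst u, snd u)]"
  unfolding winv_def by (cases u) auto

lemma foldr_inv: "reduced z \<Longrightarrow> foldr red_cons (w @ winv w) z = z"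
proof (induction w arbitrary: z)
  case Nil then show ?case by (simp add: winv_def)
next
  case (Cons u w)
  have "foldr red_cons ((u # w) @ winv (u # w)) z
      = red_cons u (foldr red_cons (w @ winv w) (red_cons (\<not> fst u, snd u) z))"
    by (simp add: winv_Cons)
  also have "\<dots> = red_cons u (red_cons (\<not> fst u, snd u) z)"
    using Cons red_cons_reduced by metis
  also have "\<dots> = z" using cancel_lemma[OF Cons.prems] by (simp add: canceling_def)
  finally show ?case .
qed

lemma reduce_inv: "reduce (w @ winv w) = []"
  using foldr_inv[of "[]" w] by (simp add: reduce_def)

lemma set_red_cons: "snd ` set (red_cons u w) \<subseteq> insert (snd u) (snd ` set w)"
  unfolding red_cons_def by (auto split: list.splits)

lemma set_foldr: "snd ` set (foldr red_cons xs z) \<subseteq> snd ` set xs \<union> snd ` set z"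
proof (induction xs)
  case (Cons x xs)
  have "snd ` set (foldr red_cons (x # xs) z) = snd ` set (red_cons x (foldr red_cons xs z))" by simp
  also have "\<dots> \<subseteq> insert (snd x) (snd ` set (foldr red_cons xs z))" by (rule set_red_cons)
  also have "\<dots> \<subseteq> snd ` set (x # xs) \<union> snd ` set z" using Cons.IH by auto
  finally show ?case .
qed simp

lemma set_reduce: "snd ` set (reduce w) \<subseteq> snd ` set w"
  unfolding reduce_def using set_foldr[of w "[]"] by simp

lemma set_winv: "snd ` set (winv w) = snd ` set w"
  unfolding winv_def by (simp add: image_image split_def)

lemma free_group_simps [simp]:
  "carrier (free_group S) = {w. reduced w \<and> snd ` set w \<subseteq> S}"
  "x \<otimes>\<^bsub>free_group S\<^esub> y = reduce (x @ y)"
  "\<one>\<^bsub>free_group S\<^esub> = []"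
  unfolding free_group_def by auto

lemma group_free_group: "group (free_group S)"
proof (rule groupI)
  fix x y assume xy: "x \<in> carrier (free_group S)" "y \<in> carrier (free_group S)"
  have "snd ` set (x @ y) \<subseteq> S" using xy by (simp add: image_Un)
  then have "snd ` set (reduce (x @ y)) \<subseteq> S" using set_reduce[of "x @ y"] by (rule order_trans[rotated])
  then show "x \<otimes>\<^bsub>free_group S\<^esub> y \<in> carrier (free_group S)"
    using reduce_reduced[of "x @ y"] by simp
next
  fix x y z assume "x \<in> carrier (free_group S)" "y \<in> carrier (free_group S)" "z \<in> carrier (free_group S)"
  show "x \<otimes>\<^bsub>free_group S\<^esub> y \<otimes>\<^bsub>free_group S\<^esub> z = x \<otimes>\<^bsub>free_group S\<^esub> (y \<otimes>\<^bsub>free_group S\<^esub> z)"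
    by (simp add: reduce_append_left reduce_append_right)
next
  fix x assume x: "x \<in> carrier (free_group S)"
  then show "\<one>\<^bsub>free_group S\<^esub> \<otimes>\<^bsub>free_group S\<^esub> x = x" by (simp add: reduce_id)
  show "\<exists>y\<in>carrier (free_group S). y \<otimes>\<^bsub>free_group S\<^esub> x = \<one>\<^bsub>free_group S\<^esub>"
  proof (intro bexI)
    show "reduce (winv x) \<otimes>\<^bsub>free_group S\<^esub> x = \<one>\<^bsub>free_group S\<^esub>"
      using reduce_inv[of "winv x"] by (simp add: reduce_append_left)
    have "snd ` set (winv x) \<subseteq> S" using x set_winv[of x] by simp
    then have "snd ` set (reduce (winv x)) \<subseteq> S" using set_reduce[of "winv x"] by (rule order_trans[rotated])
    then show "reduce (winv x) \<in> carrier (free_group S)"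
      using reduce_reduced[of "winv x"] by simp
  qed
next
  show "\<one>\<^bsub>free_group S\<^esub> \<in> carrier (free_group S)" by simp
qed

context
  fixes G :: "('g, 'c) monoid_scheme" and f :: "'a \<Rightarrow> 'g" and S :: "'a set"
  assumes G: "group G" and fS: "f ` S \<subseteq> carrier G"
begin

definition lval :: "bool \<times> 'a \<Rightarrow> 'g" where
  "lval u = (if fst u then inv\<^bsub>G\<^esub> (f (snd u)) else f (snd u))"

lemma free_lift_Nil: "free_lift G f [] = \<one>\<^bsub>G\<^esub>"
  unfolding free_lift_def by simp

lemma free_lift_Cons: "free_lift G f (u # w) = lval u \<otimes>\<^bsub>G\<^esub> free_lift G f w"
  unfolding free_lift_def lval_def by simp

lemma lval_closed: "snd u \<in> S \<Longrightarrow> lval u \<in> carrier G"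
  using fS group.inv_closed[OF G] unfolding lval_def by auto

lemma free_lift_closed: "snd ` set w \<subseteq> S \<Longrightarrow> free_lift G f w \<in> carrier G"
  by (induction w) (auto simp: free_lift_Nil free_lift_Cons lval_closed group.is_monoid[OF G]
      intro: monoid.m_closed[OF group.is_monoid[OF G]] monoid.one_closed[OF group.is_monoid[OF G]])

lemma free_lift_append: "snd ` set u \<subseteq> S \<Longrightarrow> snd ` set v \<subseteq> S \<Longrightarrow>
    free_lift G f (u @ v) = free_lift G f u \<otimes>\<^bsub>G\<^esub> free_lift G f v"
proof (induction u)
  case Nil then show ?case
    using free_lift_closed[of v] by (simp add: free_lift_Nil monoid.l_one[OF group.is_monoid[OF G]])
next
  case (Cons x u)
  then show ?case using free_lift_closed[of u] free_lift_closed[of v] lval_closed[of x]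
    by (simp add: free_lift_Cons monoid.m_assoc[OF group.is_monoid[OF G]])
qed

lemma lval_cancel: "canceling u v \<Longrightarrow> snd u \<in> S \<Longrightarrow> lval u \<otimes>\<^bsub>G\<^esub> lval v = \<one>\<^bsub>G\<^esub>"
  unfolding canceling_def lval_def
  using fS group.l_inv[OF G] group.r_inv[OF G]
  by (cases u; cases v) (auto split: if_splits)

lemma free_lift_red_cons: "snd ` set (u # w) \<subseteq> S \<Longrightarrow>
    free_lift G f (red_cons u w) = lval u \<otimes>\<^bsub>G\<^esub> free_lift G f w"
proof (cases w)
  case (Cons v w')
  assume a: "snd ` set (u # w) \<subseteq> S"
  show ?thesis
  proof (cases "canceling u v")
    case True
    have "lval u \<otimes>\<^bsub>G\<^esub> free_lift G f w = (lval u \<otimes>\<^bsub>G\<^esub> lval v) \<otimes>\<^bsub>G\<^esub> free_lift G f w'"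
      using a Cons lval_closed free_lift_closed[of w']
      by (simp add: free_lift_Cons monoid.m_assoc[OF group.is_monoid[OF G]])
    also have "\<dots> = free_lift G f w'"
      using lval_cancel[OF True] a Cons free_lift_closed[of w'] by (simp add: monoid.l_one[OF group.is_monoid[OF G]])
    finally show ?thesis using True Cons by (simp add: red_cons_def)
  qed (simp add: red_cons_def Cons free_lift_Cons)
qed (simp add: red_cons_def free_lift_Cons)

lemma free_lift_reduce: "snd ` set w \<subseteq> S \<Longrightarrow> free_lift G f (reduce w) = free_lift G f w"
proof (induction w)
  case Nil then show ?case by (simp add: reduce_def)
next
  case (Cons u w)
  have "snd ` set (u # reduce w) \<subseteq> S" using Cons.prems set_reduce[of w] by auto
  then show ?case using Cons by (simp add: reduce_Cons free_lift_red_cons free_lift_Cons)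
qed

lemma free_lift_hom: "free_lift G f \<in> hom (free_group S) G"
  unfolding hom_def
proof (auto intro!: free_lift_closed)
  fix x y assume "reduced x" "snd ` set x \<subseteq> S" "reduced y" "snd ` set y \<subseteq> S"
  then show "free_lift G f (reduce (x @ y)) = free_lift G f x \<otimes>\<^bsub>G\<^esub> free_lift G f y"
    by (subst free_lift_reduce) (auto simp: free_lift_append)
qed

lemma free_lift_group_hom: "group_hom (free_group S) G (free_lift G f)"
  by (simp add: G group_free_group group_hom_axioms_def group_hom_def free_lift_hom)

end

lemma free_lift_gen: "group G \<Longrightarrow> f x \<in> carrier G \<Longrightarrow> free_lift G f (gen x) = f x"
  unfolding free_lift_def gen_def by (simp add: monoid.r_one[OF group.is_monoid])

lemma gen_carrier: "x \<in> S \<Longrightarrow> gen x \<in> carrier (free_group S)"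
  unfolding gen_def by simp


lemma exp_exists:
  fixes H (structure)
  assumes "group H"
  shows "\<exists>d. \<forall>m. (\<forall>x\<in>carrier H. x [^]\<^bsub>H\<^esub> m = \<one>\<^bsub>H\<^esub>) \<longleftrightarrow> d dvd (m::nat)"
proof -
  interpret group H by fact
  define P where "P m \<longleftrightarrow> (\<forall>x\<in>carrier H. x [^] (m::nat) = \<one>)" for m
  show ?thesis
  proof (cases "\<exists>m>0. P m")
    case False
    have "P m \<longleftrightarrow> 0 dvd m" for m
    proof (cases "m = 0")
      case True then show ?thesis by (simp add: P_def)
    next
      case f2: False
      have "\<not> P m" using False f2 by blast
      with f2 show ?thesis by simp
    qed
    then show ?thesis unfolding P_def by blast
  next
    case True
    define N where "N = (LEAST m. m > 0 \<and> P m)"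
    have N: "N > 0" "P N" using LeastI_ex[OF True] unfolding N_def by auto
    have mn: "P m \<longleftrightarrow> N dvd m" for m
    proof
      assume Pm: "P m"
      have "P (m mod N)" unfolding P_def
      proof
        fix x assume x: "x \<in> carrier H"
        have "x [^] m = x [^] (m mod N) \<otimes> (x [^] N) [^] (m div N)"
          by (metis x mod_div_mult_eq mult.commute nat_pow_mult nat_pow_pow)
        then show "x [^] (m mod N) = \<one>" using Pm N x unfolding P_def by simp
      qed
      then have "m mod N = 0" using N not_less_Least[of "m mod N" "\<lambda>m. m > 0 \<and> P m"]
        unfolding N_def[symmetric] by (metis mod_less_divisor neq0_conv)
      then show "N dvd m" by auto
    next
      assume "N dvd m"
      then obtain k where "m = N * k" by auto
      then show "P m" using N unfolding P_def by (simp add: nat_pow_pow[symmetric])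
    qed
    then show ?thesis unfolding P_def by blast
  qed
qed

lemma exp_prop:
  assumes "group H"
  shows "(\<forall>x\<in>carrier H. x [^]\<^bsub>H\<^esub> m = \<one>\<^bsub>H\<^esub>) \<longleftrightarrow> group_exponent H dvd (m::nat)"
  using someI_ex[OF exp_exists[OF assms]] unfolding group_exponent_def by blast

lemma normal_Inter:
  fixes G (structure)
  assumes "group G" "A \<noteq> {}" "\<And>N. N \<in> A \<Longrightarrow> N \<lhd> G"
  shows "\<Inter>A \<lhd> G"
proof -
  interpret group G by fact
  have sub: "subgroup (\<Inter>A) G"
  proof (rule subgroups_Inter)
    show "\<And>H. H \<in> A \<Longrightarrow> subgroup H G" using assms(3) normal_imp_subgroup by blast
    show "A \<noteq> {}" by fact
  qed
  have "x \<otimes> h \<otimes> inv x \<in> \<Inter>A" if x: "x \<in> carrier G" and h: "h \<in> \<Inter>A" for x h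
  proof (rule InterI)
    fix N assume N: "N \<in> A"
    then have "h \<in> N" using h by blast
    then show "x \<otimes> h \<otimes> inv x \<in> N" using normal.inv_op_closed2[OF assms(3)[OF N] x] by blast
  qed
  then show ?thesis unfolding normal_inv_iff using sub by blast
qed

lemma inv_comm_one:
  fixes Q (structure)
  assumes "group Q" "a \<in> carrier Q" "b \<in> carrier Q"
    "inv\<^bsub>Q\<^esub> a \<otimes>\<^bsub>Q\<^esub> inv\<^bsub>Q\<^esub> b \<otimes>\<^bsub>Q\<^esub> a \<otimes>\<^bsub>Q\<^esub> b = \<one>\<^bsub>Q\<^esub>"
  shows "a \<otimes>\<^bsub>Q\<^esub> b = b \<otimes>\<^bsub>Q\<^esub> a"
proof -
  interpret group Q by fact
  have ab: "(inv a \<otimes> inv b) \<otimes> (a \<otimes> b) = \<one>"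
    using assms(4) assms(2,3) m_assoc[of "inv a \<otimes> inv b" a b] by simp
  have "inv (a \<otimes> b) = inv a \<otimes> inv b"
    by (rule inv_equality[OF ab]) (use assms(2,3) in simp_all)
  also have "\<dots> = inv (b \<otimes> a)" using assms(2,3) by (simp add: inv_mult_group)
  finally have "inv (inv (a \<otimes> b)) = inv (inv (b \<otimes> a))" by simp
  then show ?thesis using assms(2,3) by simp
qed

context group begin

definition central :: "'a \<Rightarrow> bool" where
  "central q \<longleftrightarrow> q \<in> carrier G \<and> (\<forall>p\<in>carrier G. q \<otimes> p = p \<otimes> q)"

lemma centralD: "central a \<Longrightarrow> p \<in> carrier G \<Longrightarrow> a \<otimes> p = p \<otimes> a"
  unfolding central_def by blast

lemma centralC: "central a \<Longrightarrow> a \<in> carrier G"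
  unfolding central_def by blast

lemma cancel_l: "x \<in> carrier G \<Longrightarrow> y \<in> carrier G \<Longrightarrow> x \<otimes> (inv x \<otimes> y) = y"
  by (simp add: m_assoc[symmetric])

lemma cancel_l2: "x \<in> carrier G \<Longrightarrow> y \<in> carrier G \<Longrightarrow> inv x \<otimes> (x \<otimes> y) = y"
  by (simp add: m_assoc[symmetric])

lemma central_mult:
  assumes a: "central a" and b: "central b"
  shows "central (a \<otimes> b)"
proof -
  have ac: "a \<in> carrier G" and bc: "b \<in> carrier G" using a b centralC by auto
  have "(a \<otimes> b) \<otimes> p = p \<otimes> (a \<otimes> b)" if p: "p \<in> carrier G" for p
  proof -
    have "(a \<otimes> b) \<otimes> p = a \<otimes> (b \<otimes> p)" using ac bc p by (simp add: m_assoc)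
    also have "\<dots> = a \<otimes> (p \<otimes> b)" using centralD[OF b p] by simp
    also have "\<dots> = (a \<otimes> p) \<otimes> b" using ac bc p by (simp add: m_assoc)
    also have "\<dots> = (p \<otimes> a) \<otimes> b" using centralD[OF a p] by simp
    also have "\<dots> = p \<otimes> (a \<otimes> b)" using ac bc p by (simp add: m_assoc)
    finally show ?thesis .
  qed
  then show ?thesis unfolding central_def using ac bc by blast
qed

lemma central_inv:
  assumes a: "central a"
  shows "central (inv a)"
proof -
  have ac: "a \<in> carrier G" using a centralC by auto
  have "inv a \<otimes> p = p \<otimes> inv a" if p: "p \<in> carrier G" for p
  proof -
    have "inv a \<otimes> p = inv (inv p \<otimes> a)" using ac p by (simp add: inv_mult_group)
    also have "inv p \<otimes> a = a \<otimes> inv p" using centralD[OF a, of "inv p"] p by simp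
    also have "inv (a \<otimes> inv p) = p \<otimes> inv a" using ac p by (simp add: inv_mult_group)
    finally show ?thesis .
  qed
  then show ?thesis unfolding central_def using ac by blast
qed

lemma central_one: "central \<one>"
  unfolding central_def by simp

lemma central_pow: "central a \<Longrightarrow> central (a [^] (k::nat))"
proof (induction k)
  case 0 then show ?case using central_one by simp
next
  case (Suc k)
  then show ?case using central_mult[OF Suc.IH Suc.prems] by (simp only: nat_pow_Suc)
qed

lemma psi_mult:
  fixes n m :: nat
  assumes cn: "\<And>U. U \<in> carrier G \<Longrightarrow> central (U [^] n)"
    and cm: "\<And>U V. U \<in> carrier G \<Longrightarrow> V \<in> carrier G \<Longrightarrow>
       (inv (V [^] n) \<otimes> inv (U [^] n) \<otimes> (U \<otimes> V) [^] n) [^] m = \<one>"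
    and U: "U \<in> carrier G" and V: "V \<in> carrier G"
  shows "(U \<otimes> V) [^] (n * m) = U [^] (n * m) \<otimes> V [^] (n * m)"
proof -
  define A where "A = U [^] n"
  define B where "B = V [^] n"
  define Z where "Z = (U \<otimes> V) [^] n"
  define C where "C = inv B \<otimes> inv A \<otimes> Z"
  have Ac: "A \<in> carrier G" and Bc: "B \<in> carrier G" and Zc: "Z \<in> carrier G"
    unfolding A_def B_def Z_def using U V by auto
  have cA: "central A" and cB: "central B" and cZ: "central Z"
    unfolding A_def B_def Z_def using cn U V by auto
  have cC: "central C" unfolding C_def using cA cB cZ by (intro central_mult central_inv)
  have Cc: "C \<in> carrier G" using cC centralC by auto
  have e: "Z = (A \<otimes> B) \<otimes> C"
  proof -
    have "(A \<otimes> B) \<otimes> C = A \<otimes> (B \<otimes> (inv B \<otimes> (inv A \<otimes> Z)))"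
      unfolding C_def using Ac Bc Zc by (simp add: m_assoc)
    also have "\<dots> = Z" using Ac Bc Zc by (simp add: cancel_l)
    finally show ?thesis by simp
  qed
  have Cm: "C [^] m = \<one>" unfolding C_def A_def B_def Z_def using cm U V by simp
  have "(U \<otimes> V) [^] (n * m) = Z [^] m"
    unfolding Z_def using U V by (simp add: nat_pow_pow)
  also have "\<dots> = ((A \<otimes> B) \<otimes> C) [^] m" using e by simp
  also have "\<dots> = (A \<otimes> B) [^] m \<otimes> C [^] m"
    using centralD[OF cC, of "A \<otimes> B"] Ac Bc Cc by (intro pow_mult_distrib) auto
  also have "\<dots> = (A \<otimes> B) [^] m" using Cm Ac Bc by simp
  also have "\<dots> = A [^] m \<otimes> B [^] m"
    using centralD[OF cA Bc] Ac Bc by (intro pow_mult_distrib) auto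
  finally show ?thesis unfolding A_def B_def using U V by (simp add: nat_pow_pow)
qed

lemma psi_comm:
  fixes n m :: nat
  assumes cn: "\<And>U. U \<in> carrier G \<Longrightarrow> central (U [^] n)"
    and cm: "\<And>U V. U \<in> carrier G \<Longrightarrow> V \<in> carrier G \<Longrightarrow>
       (inv (V [^] n) \<otimes> inv (U [^] n) \<otimes> (U \<otimes> V) [^] n) [^] m = \<one>"
    and U: "U \<in> carrier G" and V: "V \<in> carrier G"
  shows "(U \<otimes> V \<otimes> inv U \<otimes> inv V) [^] (n * m) = \<one>"
proof -
  define p where "p = (\<lambda>Z. Z [^] (n * m))"
  have pm: "p (A \<otimes> B) = p A \<otimes> p B" if "A \<in> carrier G" "B \<in> carrier G" for A B
    unfolding p_def using psi_mult[OF cn cm that] .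
  have pc: "p A \<in> carrier G" if "A \<in> carrier G" for A unfolding p_def using that by simp
  have cp: "central (p A)" if "A \<in> carrier G" for A
    using central_pow[OF cn[OF that], of m] that unfolding p_def by (simp add: nat_pow_pow)
  have inv1: "p A \<otimes> p (inv A) = \<one>" if "A \<in> carrier G" for A
    using pm[of A "inv A"] that unfolding p_def by simp
  have "p (U \<otimes> V \<otimes> inv U \<otimes> inv V) = p U \<otimes> p V \<otimes> p (inv U) \<otimes> p (inv V)"
    using U V by (simp add: pm)
  also have "p U \<otimes> p V = p V \<otimes> p U" using centralD[OF cp[OF U] pc[OF V]] .
  also have "p V \<otimes> p U \<otimes> p (inv U) \<otimes> p (inv V) = p V \<otimes> (p U \<otimes> p (inv U)) \<otimes> p (inv V)"
    using U V pc by (simp add: m_assoc)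
  also have "\<dots> = \<one>" using inv1[OF U] inv1[OF V] U V pc by simp
  finally show ?thesis unfolding p_def .
qed

end

lemma comm_gens_carrier:
  assumes "group F" "R \<subseteq> carrier F"
  shows "{inv\<^bsub>F\<^esub> h \<otimes>\<^bsub>F\<^esub> inv\<^bsub>F\<^esub> k \<otimes>\<^bsub>F\<^esub> h \<otimes>\<^bsub>F\<^esub> k | h k. h \<in> carrier F \<and> k \<in> R} \<subseteq> carrier F"
proof clarify
  interpret group F by fact
  fix h k assume "h \<in> carrier F" "k \<in> R"
  then show "inv\<^bsub>F\<^esub> h \<otimes>\<^bsub>F\<^esub> inv\<^bsub>F\<^esub> k \<otimes>\<^bsub>F\<^esub> h \<otimes>\<^bsub>F\<^esub> k \<in> carrier F"
    using assms(2) by auto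
qed

context
  fixes F :: "('a, 'b) monoid_scheme" (structure) and R :: "'a set"
  assumes F: "group F" and RN: "R \<lhd> F"
begin

interpretation group F by (rule F)
interpretation RN: normal R F by (rule RN)

abbreviation "KK \<equiv> comm_subgroup F (carrier F) R"

lemma K_normal: "KK \<lhd> F"
  unfolding comm_subgroup_def
proof (rule normal_generateI)
  show "{inv h \<otimes> inv k \<otimes> h \<otimes> k |h k. h \<in> carrier F \<and> k \<in> R} \<subseteq> carrier F"
    using comm_gens_carrier[OF F RN.subset] .
next
  fix z g assume "z \<in> {inv h \<otimes> inv k \<otimes> h \<otimes> k |h k. h \<in> carrier F \<and> k \<in> R}" and g: "g \<in> carrier F"
  then obtain h k where hk: "h \<in> carrier F" "k \<in> R" "z = inv h \<otimes> inv k \<otimes> h \<otimes> k" by blast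
  have k: "k \<in> carrier F" using hk RN.subset by auto
  have "g \<otimes> z \<otimes> inv g = inv (g \<otimes> h \<otimes> inv g) \<otimes> inv (g \<otimes> k \<otimes> inv g) \<otimes> (g \<otimes> h \<otimes> inv g) \<otimes> (g \<otimes> k \<otimes> inv g)"
    using hk k g by (simp add: inv_mult_group m_assoc cancel_l cancel_l2)
  moreover have "g \<otimes> k \<otimes> inv g \<in> R" using RN.inv_op_closed2 g hk by blast
  moreover have "g \<otimes> h \<otimes> inv g \<in> carrier F" using g hk by simp
  ultimately show "g \<otimes> z \<otimes> inv g \<in> {inv h \<otimes> inv k \<otimes> h \<otimes> k |h k. h \<in> carrier F \<and> k \<in> R}"
    by blast
qed

lemma K_sub: "KK \<subseteq> R \<inter> derived F (carrier F)"
  unfolding comm_subgroup_def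
proof (rule generate_subgroup_incl)
  show "subgroup (R \<inter> derived F (carrier F)) F"
    by (intro subgroups_Inter_pair RN.subgroup_axioms derived_is_subgroup) simp
  show "{inv h \<otimes> inv k \<otimes> h \<otimes> k |h k. h \<in> carrier F \<and> k \<in> R} \<subseteq> R \<inter> derived F (carrier F)"
  proof clarify
    fix h k assume hk: "h \<in> carrier F" "k \<in> R"
    have k: "k \<in> carrier F" using hk RN.subset by auto
    have "inv h \<otimes> inv k \<otimes> inv (inv h) \<in> R"
      using RN.inv_op_closed2[of "inv h" "inv k"] hk k by simp
    then have "inv h \<otimes> inv k \<otimes> h \<otimes> k \<in> R" using hk k by (simp add: RN.m_closed)
    moreover have "inv h \<otimes> inv k \<otimes> h \<otimes> k \<in> derived_set F (carrier F)"
    proof -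
      have eq: "inv h \<otimes> inv k \<otimes> h \<otimes> k = inv h \<otimes> inv k \<otimes> inv (inv h) \<otimes> inv (inv k)"
        using hk k by simp
      have "inv h \<otimes> inv k \<otimes> inv (inv h) \<otimes> inv (inv k) \<in> derived_set F (carrier F)"
        by (rule UN_I[of "inv h"], simp add: hk, rule UN_I[of "inv k"], simp add: k, simp only: singleton_iff)
      then show ?thesis using eq by simp
    qed
    then have "inv h \<otimes> inv k \<otimes> h \<otimes> k \<in> derived F (carrier F)"
      unfolding derived_def by (rule generate.incl)
    ultimately show "inv h \<otimes> inv k \<otimes> h \<otimes> k \<in> R \<inter> derived F (carrier F)" by blast
  qed
qed

abbreviation "HH \<equiv> subgroup_generated F (R \<inter> derived F (carrier F))"

lemma HH_carrier: "carrier HH = R \<inter> derived F (carrier F)"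
proof -
  have s: "subgroup (R \<inter> derived F (carrier F)) F"
    by (intro subgroups_Inter_pair RN.subgroup_axioms derived_is_subgroup) simp
  then show ?thesis unfolding carrier_subgroup_generated
    using subgroup.subset[OF s] generate_subgroup_incl[OF _ s] generate.incl[of _ "carrier F \<inter> (R \<inter> derived F (carrier F))" F]
    by (metis Int_absorb1 equalityI subsetI)
qed

lemma K_normal_HH: "KK \<lhd> HH"
proof -
  have s: "subgroup (R \<inter> derived F (carrier F)) F"
    by (intro subgroups_Inter_pair RN.subgroup_axioms derived_is_subgroup) simp
  have "HH = F\<lparr>carrier := R \<inter> derived F (carrier F)\<rparr>"
    using HH_carrier unfolding subgroup_generated_def by simp
  then show ?thesis using normal_restrict_supergroup[OF s K_normal K_sub] by simp
qed

lemma hopf_group: "group (hopf_multiplier F R)"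
  unfolding hopf_multiplier_def using normal.factorgroup_is_group[OF K_normal_HH] .

lemma rcos_HH: "r_coset HH KK x = r_coset F KK x"
  unfolding r_coset_def by simp

lemma hopf_pow:
  assumes "x \<in> carrier HH"
  shows "(KK #>\<^bsub>F\<^esub> x) [^]\<^bsub>hopf_multiplier F R\<^esub> (k::nat) = KK #>\<^bsub>F\<^esub> (x [^] k)"
proof -
  interpret N: normal KK HH by (rule K_normal_HH)
  have gh: "group_hom HH (HH Mod KK) (\<lambda>a. KK #>\<^bsub>HH\<^esub> a)"
    using N.r_coset_hom_Mod N.factorgroup_is_group
    by (simp add: group_hom_axioms_def group_hom_def)
  show ?thesis
    using group_hom.hom_nat_pow[OF gh assms, of k]
    unfolding hopf_multiplier_def rcos_HH pow_subgroup_generated by simp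
qed

lemma hopf_carrier: "carrier (hopf_multiplier F R) = (\<lambda>x. KK #>\<^bsub>F\<^esub> x) ` carrier HH"
  unfolding hopf_multiplier_def carrier_FactGroup rcos_HH ..

lemma hopf_one: "\<one>\<^bsub>hopf_multiplier F R\<^esub> = KK"
  unfolding hopf_multiplier_def by simp

lemma hopf_pow_one:
  assumes "x \<in> R" "x \<in> derived F (carrier F)"
  shows "(KK #>\<^bsub>F\<^esub> x) [^]\<^bsub>hopf_multiplier F R\<^esub> (k::nat) = \<one>\<^bsub>hopf_multiplier F R\<^esub>
    \<longleftrightarrow> x [^] k \<in> KK"
proof -
  have x: "x \<in> carrier HH" using HH_carrier assms by simp
  have xk: "x [^] k \<in> carrier F" using x RN.subset HH_carrier by auto
  interpret N: normal KK HH by (rule K_normal_HH)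
  have "x [^]\<^bsub>HH\<^esub> k \<in> carrier HH" using x by simp
  then have xk2: "x [^] k \<in> carrier HH" unfolding pow_subgroup_generated .
  show ?thesis unfolding hopf_pow[OF x] hopf_one
    using N.coset_join1[of KK "x [^] k"] N.coset_join2[of "x [^] k" KK] xk2 N.subgroup_axioms
    unfolding rcos_HH[symmetric] by blast
qed

lemma key:
  fixes n m :: nat
  assumes pw: "\<And>x. x \<in> carrier F \<Longrightarrow> x [^] n \<in> R"
    and cm: "\<And>x y. x \<in> carrier F \<Longrightarrow> y \<in> carrier F \<Longrightarrow>
       (inv (y [^] n) \<otimes> inv (x [^] n) \<otimes> (x \<otimes> y) [^] n) [^] m \<in> KK"
    and r: "r \<in> derived F (carrier F)"
  shows "r [^] (n * m) \<in> KK"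
proof -
  interpret KN: normal KK F by (rule K_normal)
  let ?Q = "F Mod KK"
  let ?p = "\<lambda>a. KK #> a"
  interpret Q: group ?Q by (rule KN.factorgroup_is_group)
  have gh: "group_hom F ?Q ?p"
    using KN.r_coset_hom_Mod Q.group_axioms by (simp add: group_hom_axioms_def group_hom_def)
  interpret gh: group_hom F ?Q ?p by (rule gh)
  have Qc: "\<exists>x\<in>carrier F. U = ?p x" if "U \<in> carrier ?Q" for U
    using that unfolding carrier_FactGroup by blast
  have pone: "?p z = \<one>\<^bsub>?Q\<^esub> \<longleftrightarrow> z \<in> KK" if z: "z \<in> carrier F" for z
    unfolding one_FactGroup
  proof
    assume "?p z = KK" then show "z \<in> KK" using coset_join1[of KK z] z KN.subgroup_axioms by blast
  next
    assume "z \<in> KK" then show "?p z = KK" using coset_join2[of z KK] z KN.subgroup_axioms by blast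
  qed
  have cR: "Q.central (?p r)" if rR: "r \<in> R" for r
  proof -
    have rc: "r \<in> carrier F" using rR RN.subset by auto
    have prc: "?p r \<in> carrier ?Q" by (rule gh.hom_closed[OF rc])
    have "?p r \<otimes>\<^bsub>?Q\<^esub> P = P \<otimes>\<^bsub>?Q\<^esub> ?p r" if P: "P \<in> carrier ?Q" for P
    proof -
      from Qc[OF P] obtain g where g1: "g \<in> carrier F" and g2: "P = ?p g" by (elim bexE)
      note g = g1 g2
      have mem: "inv g \<otimes> inv r \<otimes> g \<otimes> r \<in> KK"
        unfolding comm_subgroup_def using g rc rR by (intro generate.incl) blast
      have c: "inv g \<otimes> inv r \<otimes> g \<otimes> r \<in> carrier F" using g(1) rc by simp
      have h1: "?p (inv g \<otimes> inv r \<otimes> g \<otimes> r) = \<one>\<^bsub>?Q\<^esub>" using iffD2[OF pone[OF c] mem] .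
      have h2: "?p (inv g \<otimes> inv r \<otimes> g \<otimes> r) =
          inv\<^bsub>?Q\<^esub> (?p g) \<otimes>\<^bsub>?Q\<^esub> inv\<^bsub>?Q\<^esub> (?p r) \<otimes>\<^bsub>?Q\<^esub> ?p g \<otimes>\<^bsub>?Q\<^esub> ?p r"
        using g(1) rc by (simp only: gh.hom_mult gh.hom_inv inv_closed m_closed)
      have "inv\<^bsub>?Q\<^esub> P \<otimes>\<^bsub>?Q\<^esub> inv\<^bsub>?Q\<^esub> (?p r) \<otimes>\<^bsub>?Q\<^esub> P \<otimes>\<^bsub>?Q\<^esub> ?p r = \<one>\<^bsub>?Q\<^esub>"
        unfolding g(2) using h2[symmetric] h1 by (rule trans)
      then have "P \<otimes>\<^bsub>?Q\<^esub> ?p r = ?p r \<otimes>\<^bsub>?Q\<^esub> P" by (rule inv_comm_one[OF Q.group_axioms P prc])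
      then show ?thesis by (rule sym)
    qed
    then show ?thesis unfolding Q.central_def using prc by blast
  qed
  have cn: "Q.central (U [^]\<^bsub>?Q\<^esub> n)" if U: "U \<in> carrier ?Q" for U
  proof -
    from Qc[OF U] obtain x where x1: "x \<in> carrier F" and x2: "U = ?p x" by (elim bexE)
    have "Q.central (?p (x [^] n))" by (rule cR[OF pw[OF x1]])
    also have "?p (x [^] n) = ?p x [^]\<^bsub>?Q\<^esub> n" by (rule gh.hom_nat_pow[OF x1])
    finally show ?thesis by (simp only: x2)
  qed
  have cm': "(inv\<^bsub>?Q\<^esub> (V [^]\<^bsub>?Q\<^esub> n) \<otimes>\<^bsub>?Q\<^esub> inv\<^bsub>?Q\<^esub> (U [^]\<^bsub>?Q\<^esub> n) \<otimes>\<^bsub>?Q\<^esub> (U \<otimes>\<^bsub>?Q\<^esub> V) [^]\<^bsub>?Q\<^esub> n) [^]\<^bsub>?Q\<^esub> m = \<one>\<^bsub>?Q\<^esub>"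
    if U: "U \<in> carrier ?Q" and V: "V \<in> carrier ?Q" for U V
  proof -
    from Qc[OF U] obtain x where x1: "x \<in> carrier F" and x2: "U = ?p x" by (elim bexE)
    from Qc[OF V] obtain y where y1: "y \<in> carrier F" and y2: "V = ?p y" by (elim bexE)
    note x = x1 x2
    note y = y1 y2
    have e: "?p ((inv (y [^] n) \<otimes> inv (x [^] n) \<otimes> (x \<otimes> y) [^] n) [^] m) =
      (inv\<^bsub>?Q\<^esub> (V [^]\<^bsub>?Q\<^esub> n) \<otimes>\<^bsub>?Q\<^esub> inv\<^bsub>?Q\<^esub> (U [^]\<^bsub>?Q\<^esub> n) \<otimes>\<^bsub>?Q\<^esub> (U \<otimes>\<^bsub>?Q\<^esub> V) [^]\<^bsub>?Q\<^esub> n) [^]\<^bsub>?Q\<^esub> m"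
      unfolding x(2) y(2) using x(1) y(1)
      by (simp only: gh.hom_mult gh.hom_inv gh.hom_nat_pow inv_closed m_closed nat_pow_closed)
    have c: "(inv (y [^] n) \<otimes> inv (x [^] n) \<otimes> (x \<otimes> y) [^] n) [^] m \<in> carrier F"
      using x(1) y(1) by simp
    show ?thesis using iffD2[OF pone[OF c] cm[OF x(1) y(1)]] unfolding e .
  qed
  define S where "S = {z \<in> carrier F. ?p z [^]\<^bsub>?Q\<^esub> (n * m) = \<one>\<^bsub>?Q\<^esub>}"
  have pm: "?p (a \<otimes> b) [^]\<^bsub>?Q\<^esub> (n * m) = ?p a [^]\<^bsub>?Q\<^esub> (n * m) \<otimes>\<^bsub>?Q\<^esub> ?p b [^]\<^bsub>?Q\<^esub> (n * m)"
    if a: "a \<in> carrier F" and b: "b \<in> carrier F" for a b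
    unfolding gh.hom_mult[OF a b]
    by (rule Q.psi_mult[OF cn cm' gh.hom_closed[OF a] gh.hom_closed[OF b]])
  have subS: "subgroup S F"
  proof (rule subgroupI)
    show "S \<subseteq> carrier F" unfolding S_def by auto
    have "?p \<one> [^]\<^bsub>?Q\<^esub> (n * m) = \<one>\<^bsub>?Q\<^esub>" unfolding gh.hom_one by (rule Q.nat_pow_one)
    then have "\<one> \<in> S" unfolding S_def using one_closed by blast
    then show "S \<noteq> {}" by blast
  next
    fix a assume a: "a \<in> S"
    then have ac: "a \<in> carrier F" and a1: "?p a [^]\<^bsub>?Q\<^esub> (n * m) = \<one>\<^bsub>?Q\<^esub>" unfolding S_def by auto
    have Yc: "?p (inv a) [^]\<^bsub>?Q\<^esub> (n * m) \<in> carrier ?Q"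
      by (rule Q.nat_pow_closed[OF gh.hom_closed[OF inv_closed[OF ac]]])
    have "?p (inv a) [^]\<^bsub>?Q\<^esub> (n * m) = \<one>\<^bsub>?Q\<^esub> \<otimes>\<^bsub>?Q\<^esub> ?p (inv a) [^]\<^bsub>?Q\<^esub> (n * m)"
      using Q.l_one[OF Yc] by (rule sym)
    also have "\<dots> = ?p a [^]\<^bsub>?Q\<^esub> (n * m) \<otimes>\<^bsub>?Q\<^esub> ?p (inv a) [^]\<^bsub>?Q\<^esub> (n * m)"
      by (simp only: a1)
    also have "\<dots> = ?p (a \<otimes> inv a) [^]\<^bsub>?Q\<^esub> (n * m)"
      using pm[OF ac inv_closed[OF ac]] by (rule sym)
    also have "\<dots> = \<one>\<^bsub>?Q\<^esub>" unfolding r_inv[OF ac] gh.hom_one by (rule Q.nat_pow_one)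
    finally have "?p (inv a) [^]\<^bsub>?Q\<^esub> (n * m) = \<one>\<^bsub>?Q\<^esub>" .
    then show "inv a \<in> S" using inv_closed[OF ac] unfolding S_def by blast
  next
    fix a b assume "a \<in> S" "b \<in> S"
    then have ac: "a \<in> carrier F" and a1: "?p a [^]\<^bsub>?Q\<^esub> (n * m) = \<one>\<^bsub>?Q\<^esub>"
      and bc: "b \<in> carrier F" and b1: "?p b [^]\<^bsub>?Q\<^esub> (n * m) = \<one>\<^bsub>?Q\<^esub>" unfolding S_def by auto
    have "?p (a \<otimes> b) [^]\<^bsub>?Q\<^esub> (n * m) = \<one>\<^bsub>?Q\<^esub>"
      unfolding pm[OF ac bc] a1 b1 by (rule Q.l_one[OF Q.one_closed])
    then show "a \<otimes> b \<in> S" using m_closed[OF ac bc] unfolding S_def by blast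
  qed
  have "derived_set F (carrier F) \<subseteq> S"
  proof clarify
    fix h1 h2 assume h: "h1 \<in> carrier F" "h2 \<in> carrier F"
    have e: "?p (h1 \<otimes> h2 \<otimes> inv h1 \<otimes> inv h2) = ?p h1 \<otimes>\<^bsub>?Q\<^esub> ?p h2 \<otimes>\<^bsub>?Q\<^esub> inv\<^bsub>?Q\<^esub> (?p h1) \<otimes>\<^bsub>?Q\<^esub> inv\<^bsub>?Q\<^esub> (?p h2)"
      using h by (simp only: gh.hom_mult gh.hom_inv inv_closed m_closed)
    have "?p (h1 \<otimes> h2 \<otimes> inv h1 \<otimes> inv h2) [^]\<^bsub>?Q\<^esub> (n * m) = \<one>\<^bsub>?Q\<^esub>"
      unfolding e by (rule Q.psi_comm[OF cn cm' gh.hom_closed[OF h(1)] gh.hom_closed[OF h(2)]])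
    moreover have "h1 \<otimes> h2 \<otimes> inv h1 \<otimes> inv h2 \<in> carrier F" using h by simp
    ultimately show "h1 \<otimes> h2 \<otimes> inv h1 \<otimes> inv h2 \<in> S" unfolding S_def by blast
  qed
  then have "derived F (carrier F) \<subseteq> S"
    unfolding derived_def by (rule generate_subgroup_incl[OF _ subS])
  then have r1: "?p r [^]\<^bsub>?Q\<^esub> (n * m) = \<one>\<^bsub>?Q\<^esub>" using r unfolding S_def by blast
  have rc: "r \<in> carrier F" using r derived_in_carrier[OF subset_refl] by blast
  have "?p (r [^] (n * m)) = \<one>\<^bsub>?Q\<^esub>" unfolding gh.hom_nat_pow[OF rc] by (rule r1)
  then show ?thesis using iffD1[OF pone[OF nat_pow_closed[OF rc]]] by blast
qed

end

lemma comm_in_derived: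
  fixes F (structure)
  assumes F: "group F" and x: "x \<in> carrier F" and y: "y \<in> carrier F"
  shows "inv\<^bsub>F\<^esub> (y [^]\<^bsub>F\<^esub> (n::nat)) \<otimes>\<^bsub>F\<^esub> inv\<^bsub>F\<^esub> (x [^]\<^bsub>F\<^esub> n) \<otimes>\<^bsub>F\<^esub> (x \<otimes>\<^bsub>F\<^esub> y) [^]\<^bsub>F\<^esub> n
     \<in> derived F (carrier F)"
proof -
  interpret group F by (rule F)
  let ?D = "derived F (carrier F)"
  interpret DN: normal ?D F by (rule derived_self_is_normal)
  let ?Q = "F Mod ?D"
  let ?p = "\<lambda>a. ?D #> a"
  interpret Q: comm_group ?Q by (rule derived_quot_is_comm_group)
  have gh: "group_hom F ?Q ?p"
    using DN.r_coset_hom_Mod Q.group_axioms by (simp add: group_hom_axioms_def group_hom_def)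
  interpret gh: group_hom F ?Q ?p by (rule gh)
  define A where "A = x [^] n"
  define B where "B = y [^] n"
  define Z where "Z = (x \<otimes> y) [^] n"
  have Ac: "A \<in> carrier F" and Bc: "B \<in> carrier F" and Zc: "Z \<in> carrier F"
    unfolding A_def B_def Z_def using x y by auto
  have pA: "?p A = ?p x [^]\<^bsub>?Q\<^esub> n" unfolding A_def by (rule gh.hom_nat_pow[OF x])
  have pB: "?p B = ?p y [^]\<^bsub>?Q\<^esub> n" unfolding B_def by (rule gh.hom_nat_pow[OF y])
  have pxc: "?p x \<in> carrier ?Q" by (rule gh.hom_closed[OF x])
  have pyc: "?p y \<in> carrier ?Q" by (rule gh.hom_closed[OF y])
  have pZ: "?p Z = ?p A \<otimes>\<^bsub>?Q\<^esub> ?p B"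
  proof -
    have "?p Z = (?p x \<otimes>\<^bsub>?Q\<^esub> ?p y) [^]\<^bsub>?Q\<^esub> n"
      unfolding Z_def gh.hom_nat_pow[OF m_closed[OF x y]] gh.hom_mult[OF x y] ..
    also have "\<dots> = ?p x [^]\<^bsub>?Q\<^esub> n \<otimes>\<^bsub>?Q\<^esub> ?p y [^]\<^bsub>?Q\<^esub> n"
      by (rule Q.pow_mult_distrib[OF Q.m_comm[OF pxc pyc] pxc pyc])
    finally show ?thesis unfolding pA pB .
  qed
  have pAc: "?p A \<in> carrier ?Q" by (rule gh.hom_closed[OF Ac])
  have pBc: "?p B \<in> carrier ?Q" by (rule gh.hom_closed[OF Bc])
  have "?p (inv B \<otimes> inv A \<otimes> Z) = inv\<^bsub>?Q\<^esub> (?p B) \<otimes>\<^bsub>?Q\<^esub> inv\<^bsub>?Q\<^esub> (?p A) \<otimes>\<^bsub>?Q\<^esub> ?p Z"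
    unfolding gh.hom_mult[OF m_closed[OF inv_closed[OF Bc] inv_closed[OF Ac]] Zc]
      gh.hom_mult[OF inv_closed[OF Bc] inv_closed[OF Ac]] gh.hom_inv[OF Ac] gh.hom_inv[OF Bc] ..
  also have "\<dots> = inv\<^bsub>?Q\<^esub> (?p B) \<otimes>\<^bsub>?Q\<^esub> (inv\<^bsub>?Q\<^esub> (?p A) \<otimes>\<^bsub>?Q\<^esub> (?p A \<otimes>\<^bsub>?Q\<^esub> ?p B))"
    unfolding pZ using Q.m_assoc[OF Q.inv_closed[OF pBc] Q.inv_closed[OF pAc] Q.m_closed[OF pAc pBc]] .
  also have "\<dots> = inv\<^bsub>?Q\<^esub> (?p B) \<otimes>\<^bsub>?Q\<^esub> ?p B"
    unfolding Q.cancel_l2[OF pAc pBc] ..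
  also have "\<dots> = \<one>\<^bsub>?Q\<^esub>" by (rule Q.l_inv[OF pBc])
  finally have "?p (inv B \<otimes> inv A \<otimes> Z) = ?D" unfolding one_FactGroup .
  then have "inv B \<otimes> inv A \<otimes> Z \<in> ?D"
    using coset_join1[of ?D "inv B \<otimes> inv A \<otimes> Z"] Ac Bc Zc DN.subgroup_axioms by simp
  then show ?thesis unfolding A_def B_def Z_def .
qed


declare free_group_simps[simp del]

theorem theorem1:
  fixes n :: nat and G :: "('g, 'c) monoid_scheme"
  assumes "n \<ge> 2" and "group G" and "finite (carrier G)"
    and "group_exponent G = n"
  shows "group_exponent (schur_multiplier G) dvd n * schur_e n"
proof -
  interpret G: group G by (rule assms(2))
  define F where "F = free_group (carrier G)"
  define phG where "phG = free_lift G id"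
  define R where "R = kernel F G phG"
  have Fg: "group F" unfolding F_def by (rule group_free_group)
  interpret F: group F by (rule Fg)
  have ghG: "group_hom F G phG"
    using free_lift_group_hom[of G id "carrier G"] assms(2) by (simp add: F_def phG_def)
  interpret ghG: group_hom F G phG by (rule ghG)
  have RN: "R \<lhd> F" unfolding R_def by (rule ghG.normal_kernel)
  have Gn: "g [^]\<^bsub>G\<^esub> n = \<one>\<^bsub>G\<^esub>" if "g \<in> carrier G" for g
    using exp_prop[OF assms(2), of n] assms(4) that by simp
  have pw: "x [^]\<^bsub>F\<^esub> n \<in> R" if x: "x \<in> carrier F" for x
  proof -
    have c: "x [^]\<^bsub>F\<^esub> n \<in> carrier F" by (rule F.nat_pow_closed[OF x])
    have "phG (x [^]\<^bsub>F\<^esub> n) = \<one>\<^bsub>G\<^esub>"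
      unfolding ghG.hom_nat_pow[OF x] by (rule Gn[OF ghG.hom_closed[OF x]])
    then show ?thesis unfolding R_def kernel_def using c by blast
  qed
  define e where "e = schur_e n"
  have F2g: "group F2" by (rule group_free_group)
  interpret F2: group F2 by (rule F2g)
  have stepA: "(inv\<^bsub>F\<^esub> (y [^]\<^bsub>F\<^esub> n) \<otimes>\<^bsub>F\<^esub> inv\<^bsub>F\<^esub> (x [^]\<^bsub>F\<^esub> n) \<otimes>\<^bsub>F\<^esub> (x \<otimes>\<^bsub>F\<^esub> y) [^]\<^bsub>F\<^esub> n) [^]\<^bsub>F\<^esub> e
      \<in> comm_subgroup F (carrier F) R" if x: "x \<in> carrier F" and y: "y \<in> carrier F" for x y
  proof -
    define f where "f = (\<lambda>b::bool. if b then y else x)"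
    define ph where "ph = free_lift F f"
    have ghp: "group_hom F2 F ph"
      unfolding ph_def using free_lift_group_hom[OF Fg, of f UNIV] x y by (auto simp: f_def)
    interpret ghp: group_hom F2 F ph by (rule ghp)
    define ps where "ps = (\<lambda>w. phG (ph w))"
    have "ps \<in> hom F2 G"
    proof (rule homI)
      fix a assume a: "a \<in> carrier F2"
      show "ps a \<in> carrier G" unfolding ps_def by (rule ghG.hom_closed[OF ghp.hom_closed[OF a]])
      fix b assume b: "b \<in> carrier F2"
      show "ps (a \<otimes>\<^bsub>F2\<^esub> b) = ps a \<otimes>\<^bsub>G\<^esub> ps b"
        unfolding ps_def ghp.hom_mult[OF a b] by (rule ghG.hom_mult[OF ghp.hom_closed[OF a] ghp.hom_closed[OF b]])
    qed
    then have ghps: "group_hom F2 G ps"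
      using F2g assms(2) by (simp add: group_hom_def group_hom_axioms_def)
    interpret ghps: group_hom F2 G ps by (rule ghps)
    define N where "N = kernel F2 G ps"
    have NN: "N \<lhd> F2" unfolding N_def by (rule ghps.normal_kernel)
    have Nfin: "finite (carrier (F2 Mod N))"
      unfolding N_def
      by (rule inj_on_finite[OF ghps.FactGroup_inj_on _ assms(3)])
         (auto intro: ghps.FactGroup_the_elem_mem)
    have Npow: "z [^]\<^bsub>F2\<^esub> n \<in> N" if z: "z \<in> carrier F2" for z
    proof -
      have c: "z [^]\<^bsub>F2\<^esub> n \<in> carrier F2" by (rule F2.nat_pow_closed[OF z])
      have "ps (z [^]\<^bsub>F2\<^esub> n) = \<one>\<^bsub>G\<^esub>"
        unfolding ghps.hom_nat_pow[OF z] by (rule Gn[OF ghps.hom_closed[OF z]])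
      then show ?thesis unfolding N_def kernel_def using c by blast
    qed
    define R2 where "R2 = burnside_R n"
    have R2N': "R2 \<subseteq> N"
      unfolding R2_def burnside_R_def using NN Nfin Npow by blast
    have selfin: "finite (carrier (F2 Mod carrier F2))"
    proof (rule finite_subset)
      show "carrier (F2 Mod carrier F2) \<subseteq> {carrier F2}"
        unfolding carrier_FactGroup
        using F2.coset_join2[OF _ F2.subgroup_self] by auto
    qed simp
    have famne: "{N. N \<lhd> F2 \<and> finite (carrier (F2 Mod N)) \<and> (\<forall>x\<in>carrier F2. x [^]\<^bsub>F2\<^esub> n \<in> N)} \<noteq> {}"
      using F2.normal_self selfin by blast
    have R2N: "R2 \<lhd> F2"
      unfolding R2_def burnside_R_def by (rule normal_Inter[OF F2g famne]) blast
    interpret R2N: normal R2 F2 by (rule R2N)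
    have R2pow: "z [^]\<^bsub>F2\<^esub> n \<in> R2" if "z \<in> carrier F2" for z
      unfolding R2_def burnside_R_def using that by blast
    have ga: "gen_a \<in> carrier F2" by (rule gen_carrier) (rule UNIV_I)
    have gb: "gen_b \<in> carrier F2" by (rule gen_carrier) (rule UNIV_I)
    define w where "w = inv\<^bsub>F2\<^esub> (gen_b [^]\<^bsub>F2\<^esub> n) \<otimes>\<^bsub>F2\<^esub> inv\<^bsub>F2\<^esub> (gen_a [^]\<^bsub>F2\<^esub> n)
                \<otimes>\<^bsub>F2\<^esub> (gen_a \<otimes>\<^bsub>F2\<^esub> gen_b) [^]\<^bsub>F2\<^esub> n"
    have wR: "w \<in> R2" unfolding w_def
      by (intro R2N.m_closed R2N.m_inv_closed R2pow F2.m_closed ga gb)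
    have wD: "w \<in> derived F2 (carrier F2)" unfolding w_def
      by (rule comm_in_derived[OF F2g ga gb])
    let ?K2 = "comm_subgroup F2 (carrier F2) R2"
    let ?C = "?K2 #>\<^bsub>F2\<^esub> w"
    have Ccar: "?C \<in> carrier (hopf_multiplier F2 R2)"
      unfolding hopf_carrier[OF F2g R2N] HH_carrier[OF F2g R2N] using wR wD by blast
    have eC: "e = group.ord (hopf_multiplier F2 R2) ?C"
      unfolding e_def schur_e_def Let_def R2_def w_def ..
    have "?C [^]\<^bsub>hopf_multiplier F2 R2\<^esub> e = \<one>\<^bsub>hopf_multiplier F2 R2\<^esub>"
      using group.pow_eq_id[OF hopf_group[OF F2g R2N] Ccar] eC by simp
    then have weK: "w [^]\<^bsub>F2\<^esub> e \<in> ?K2" using hopf_pow_one[OF F2g R2N wR wD] by simp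
    define gens2 where "gens2 = {inv\<^bsub>F2\<^esub> h \<otimes>\<^bsub>F2\<^esub> inv\<^bsub>F2\<^esub> k \<otimes>\<^bsub>F2\<^esub> h \<otimes>\<^bsub>F2\<^esub> k | h k. h \<in> carrier F2 \<and> k \<in> R2}"
    define gens where "gens = {inv\<^bsub>F\<^esub> h \<otimes>\<^bsub>F\<^esub> inv\<^bsub>F\<^esub> k \<otimes>\<^bsub>F\<^esub> h \<otimes>\<^bsub>F\<^esub> k | h k. h \<in> carrier F \<and> k \<in> R}"
    have g2c: "gens2 \<subseteq> carrier F2" unfolding gens2_def
      by (rule comm_gens_carrier[OF F2g R2N.subset])
    have imgs: "ph ` gens2 \<subseteq> gens"
    proof clarify
      fix z assume "z \<in> gens2"
      then obtain h k where hk: "h \<in> carrier F2" "k \<in> R2" "z = inv\<^bsub>F2\<^esub> h \<otimes>\<^bsub>F2\<^esub> inv\<^bsub>F2\<^esub> k \<otimes>\<^bsub>F2\<^esub> h \<otimes>\<^bsub>F2\<^esub> k"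
        unfolding gens2_def by blast
      have kc: "k \<in> carrier F2" using hk R2N.subset by auto
      have "ph k \<in> R" using R2N' hk(2) kc unfolding R_def N_def kernel_def ps_def by auto
      moreover have "ph z = inv\<^bsub>F\<^esub> (ph h) \<otimes>\<^bsub>F\<^esub> inv\<^bsub>F\<^esub> (ph k) \<otimes>\<^bsub>F\<^esub> ph h \<otimes>\<^bsub>F\<^esub> ph k"
        using hk kc by simp
      moreover have "ph h \<in> carrier F" by (rule ghp.hom_closed[OF hk(1)])
      ultimately show "ph z \<in> gens" unfolding gens_def by blast
    qed
    have "ph ` ?K2 \<subseteq> comm_subgroup F (carrier F) R"
      unfolding comm_subgroup_def gens2_def[symmetric] gens_def[symmetric]
      using ghp.generate_img[OF g2c] F.mono_generate[OF imgs] by simp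
    then have "ph (w [^]\<^bsub>F2\<^esub> e) \<in> comm_subgroup F (carrier F) R" using weK by blast
    moreover have "ph (w [^]\<^bsub>F2\<^esub> e) = (ph w) [^]\<^bsub>F\<^esub> e"
      using wR R2N.subset by (intro ghp.hom_nat_pow) auto
    moreover have "ph gen_a = x" "ph gen_b = y"
      unfolding ph_def using free_lift_gen[OF Fg, of f] x y by (auto simp: f_def)
    then have "ph w = inv\<^bsub>F\<^esub> (y [^]\<^bsub>F\<^esub> n) \<otimes>\<^bsub>F\<^esub> inv\<^bsub>F\<^esub> (x [^]\<^bsub>F\<^esub> n) \<otimes>\<^bsub>F\<^esub> (x \<otimes>\<^bsub>F\<^esub> y) [^]\<^bsub>F\<^esub> n"
      unfolding w_def using ga gb by (simp add: ghp.hom_nat_pow)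
    ultimately show ?thesis by simp
  qed
  have keyr: "r [^]\<^bsub>F\<^esub> (n * e) \<in> comm_subgroup F (carrier F) R"
    if "r \<in> derived F (carrier F)" for r
    by (rule key[OF Fg RN pw stepA that])
  have SM: "schur_multiplier G = hopf_multiplier F R"
    unfolding schur_multiplier_def F_def R_def phG_def ..
  have "\<forall>XX\<in>carrier (hopf_multiplier F R). XX [^]\<^bsub>hopf_multiplier F R\<^esub> (n * e) = \<one>\<^bsub>hopf_multiplier F R\<^esub>"
  proof
    fix XX assume "XX \<in> carrier (hopf_multiplier F R)"
    then obtain r where r0: "r \<in> R \<inter> derived F (carrier F)"
      and r3: "XX = comm_subgroup F (carrier F) R #>\<^bsub>F\<^esub> r"
      unfolding hopf_carrier[OF Fg RN] HH_carrier[OF Fg RN] by (elim imageE)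
    have r: "r \<in> R" "r \<in> derived F (carrier F)" "XX = comm_subgroup F (carrier F) R #>\<^bsub>F\<^esub> r"
      using r0 r3 by auto
    show "XX [^]\<^bsub>hopf_multiplier F R\<^esub> (n * e) = \<one>\<^bsub>hopf_multiplier F R\<^esub>"
      unfolding r(3) hopf_pow_one[OF Fg RN r(1,2)] using keyr r(2) .
  qed
  then show ?thesis
    unfolding SM e_def[symmetric] using exp_prop[OF hopf_group[OF Fg RN]] by blast
qed

end
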